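(* Let $F$ be a field with $\operatorname{char}(F)\neq 2$ and let $U$ be a noncommutative unital prime associative $F$-algebra. Consider the algebra $A=U\times U$ as a superalgebra with respect to the grading induced by the exchange automorphism $(u,v)\mapsto(v,u)$, i.e. $A_0=\{(u,u):u\in U\}$ and $A_1=\{(u,-u):u\in U\}$. Then every Lie superautomorphism $\varphi$ of $A$ is either a superautomorphism or the negative of a superantiautomorphism.
   Context: A superalgebra is an algebra $A=A_0\oplus A_1$ with $A_iA_j\subseteq A_{i+j}$ ($i,j\in\mathbb Z_2$); homogeneous elements of $A_i$ have degree $|x|=i$; graded linear maps preserve degrees. The supercommutator is $[x,y]_s=xy-(-1)^{|x||y|}yx$ for homogeneous $x,y$, extended bilinearly. A Lie superautomorphism of $A$ is a bijective graded linear map $\varphi:A\to A$ with $\varphi([x,y]_s)=[\varphi(x),\varphi(y)]_s$. A superautomorphism is a bijective graded algebra homomorphism; a superantiautomorphism is a bijective graded linear map $\psi$ with $\psi(xy)=(-1)^{|x||y|}\psi(y)\psi(x)$ for homogeneous $x,y$. *)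

theory Defs
  imports Complex_Main "HOL-Library.Product_Plus"
begin

text \<open>The unital associative F-algebra U is a type 'u of class ring_1 together with a
scalar multiplication scale by the field 'k making it an F-module, compatible with
the product. The algebra A = U x U carries componentwise operations
(addition from Product_Plus, product and scalars defined below).\<close>

definition F_algebra :: "('k::field \<Rightarrow> 'u::ring_1 \<Rightarrow> 'u) \<Rightarrow> bool" where
  "F_algebra scale \<longleftrightarrow> module scale \<and>
     (\<forall>c x y. scale c (x * y) = scale c x * y \<and> scale c (x * y) = x * scale c y)"

definition prime_ring :: "'u::ring_1 itself \<Rightarrow> bool" where
  "prime_ring _ \<longleftrightarrow> (\<forall>a b::'u. (\<forall>x. a * x * b = 0) \<longrightarrow> a = 0 \<or> b = 0)"

definition pmult :: "'u::ring_1 \<times> 'u \<Rightarrow> 'u \<times> 'u \<Rightarrow> 'u \<times> 'u" where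
  "pmult p q = (fst p * fst q, snd p * snd q)"

definition pscale :: "('k \<Rightarrow> 'u \<Rightarrow> 'u) \<Rightarrow> 'k \<Rightarrow> 'u \<times> 'u \<Rightarrow> 'u \<times> 'u" where
  "pscale scale c p = (scale c (fst p), scale c (snd p))"

definition A0 :: "('u::ring_1 \<times> 'u) set" where
  "A0 = {(u, u) | u. True}"

definition A1 :: "('u::ring_1 \<times> 'u) set" where
  "A1 = {(u, - u) | u. True}"

definition homog :: "('u::ring_1 \<times> 'u) set" where
  "homog = A0 \<union> A1"

text \<open>Supercommutator on homogeneous elements (sign -1 exactly when both are odd;
for the element 0, lying in both components, both readings give 0).\<close>
definition scomm :: "'u::ring_1 \<times> 'u \<Rightarrow> 'u \<times> 'u \<Rightarrow> 'u \<times> 'u" where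
  "scomm x y = (if x \<in> A1 \<and> y \<in> A1 then pmult x y + pmult y x else pmult x y - pmult y x)"

definition graded_linear :: "('k::field \<Rightarrow> 'u::ring_1 \<Rightarrow> 'u) \<Rightarrow> ('u \<times> 'u \<Rightarrow> 'u \<times> 'u) \<Rightarrow> bool" where
  "graded_linear scale f \<longleftrightarrow>
     (\<forall>x y. f (x + y) = f x + f y) \<and> (\<forall>c x. f (pscale scale c x) = pscale scale c (f x)) \<and>
     f ` A0 \<subseteq> A0 \<and> f ` A1 \<subseteq> A1"

definition lie_superaut :: "('k::field \<Rightarrow> 'u::ring_1 \<Rightarrow> 'u) \<Rightarrow> ('u \<times> 'u \<Rightarrow> 'u \<times> 'u) \<Rightarrow> bool" where
  "lie_superaut scale f \<longleftrightarrow> bij f \<and> graded_linear scale f \<and>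
     (\<forall>x\<in>homog. \<forall>y\<in>homog. f (scomm x y) = scomm (f x) (f y))"

definition superaut :: "('k::field \<Rightarrow> 'u::ring_1 \<Rightarrow> 'u) \<Rightarrow> ('u \<times> 'u \<Rightarrow> 'u \<times> 'u) \<Rightarrow> bool" where
  "superaut scale f \<longleftrightarrow> bij f \<and> graded_linear scale f \<and>
     (\<forall>x y. f (pmult x y) = pmult (f x) (f y))"

definition superantiaut :: "('k::field \<Rightarrow> 'u::ring_1 \<Rightarrow> 'u) \<Rightarrow> ('u \<times> 'u \<Rightarrow> 'u \<times> 'u) \<Rightarrow> bool" where
  "superantiaut scale f \<longleftrightarrow> bij f \<and> graded_linear scale f \<and>
     (\<forall>x\<in>homog. \<forall>y\<in>homog.
        f (pmult x y) = (if x \<in> A1 \<and> y \<in> A1 then - pmult (f y) (f x) else pmult (f y) (f x)))"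

end

theory Submission
  imports Defs
begin

lemma half_twice:
  fixes scale :: "'k::field \<Rightarrow> 'u::ring_1 \<Rightarrow> 'u"
  assumes char: "(2::'k) \<noteq> 0" and alg: "F_algebra scale"
  shows "scale (inverse 2) x + scale (inverse 2) x = x"
proof -
  interpret module scale using alg by (simp add: F_algebra_def)
  have "(inverse 2 :: 'k) + inverse 2 = 1" using char by (simp add: field_simps)
  hence "scale (inverse 2) x + scale (inverse 2) x = scale 1 x"
    by (metis scale_left_distrib)
  thus ?thesis by simp
qed

lemma half_dbl:
  fixes scale :: "'k::field \<Rightarrow> 'u::ring_1 \<Rightarrow> 'u"
  assumes char: "(2::'k) \<noteq> 0" and alg: "F_algebra scale"
  shows "scale (inverse 2) (x + x) = x"
proof -
  interpret module scale using alg by (simp add: F_algebra_def)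
  show ?thesis using half_twice[OF char alg] by (simp add: scale_right_distrib)
qed

lemma two_cancel:
  fixes scale :: "'k::field \<Rightarrow> 'u::ring_1 \<Rightarrow> 'u"
  assumes char: "(2::'k) \<noteq> 0" and alg: "F_algebra scale"
    and "x + x = (0::'u)"
  shows "x = 0"
proof -
  interpret module scale using alg by (simp add: F_algebra_def)
  have "x = scale (inverse 2) (x + x)" using half_dbl[OF char alg] by simp
  thus ?thesis using assms(3) by simp
qed

lemma two_cancel_eq:
  fixes scale :: "'k::field \<Rightarrow> 'u::ring_1 \<Rightarrow> 'u"
  assumes char: "(2::'k) \<noteq> 0" and alg: "F_algebra scale"
    and "x + x = y + (y::'u)"
  shows "x = y"
proof -
  have "(x - y) + (x - y) = (x + x) - (y + y)" by (simp add: algebra_simps)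
  hence "(x - y) + (x - y) = 0" using assms(3) by simp
  hence "x - y = 0" using two_cancel[OF char alg] by blast
  thus ?thesis by simp
qed

lemma central_nozd:
  fixes z w :: "'u::ring_1"
  assumes prime: "prime_ring TYPE('u)" and c: "\<And>x. z * x = x * z" and "z * w = 0"
  shows "z = 0 \<or> w = 0"
proof -
  have "\<forall>x. z * x * w = 0" using c assms(3) by (metis mult.assoc mult_zero_right)
  thus ?thesis using prime unfolding prime_ring_def by blast
qed

lemma comm_central_commutative:
  fixes b c :: "'u::ring_1"
  assumes prime: "prime_ring TYPE('u)"
    and cc: "\<And>p q r::'u. q * (p * r - r * p) = (p * r - r * p) * q"
  shows "b * c = c * b"
proof -
  define z where "z = b*c - c*b"
  have h1: "b*(b*c) - (b*c)*b = b*z" unfolding z_def by (simp add: algebra_simps)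
  have h2: "c*(b*z) = (b*z)*c" using cc[of c b "b*c"] h1 by simp
  have h3: "z*c = c*z" using cc[of c b c] unfolding z_def by simp
  have h4: "z*b = b*z" using cc[of b b c] unfolding z_def by simp
  have "z*z = b*(c*z) - c*(b*z)" unfolding z_def by (simp add: algebra_simps)
  also have "\<dots> = b*(z*c) - c*(b*z)" using h3 by simp
  also have "\<dots> = 0" using h2 by (simp add: mult.assoc)
  finally have zz: "z*z = 0" .
  have "\<And>x. z * x = x * z" unfolding z_def by (rule cc[symmetric])
  hence "z = 0" using central_nozd[OF prime, of z z] zz by blast
  thus ?thesis unfolding z_def by simp
qed

lemma assoc_core:
  fixes A B a b c :: "'u::ring_1"
  assumes cA: "\<And>x. A*x = x*A" and cB: "\<And>x. B*x = x*B"
    and E: "A*((A*(a*b)+B*(b*a))*c) + B*(c*(A*(a*b)+B*(b*a)))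
          = A*(a*(A*(b*c)+B*(c*b))) + B*((A*(b*c)+B*(c*b))*a)"
  shows "A*(B*(b*(a*c - c*a) - (a*c-c*a)*b)) = 0"
proof -
  have rA: "x*(A*y) = A*(x*y)" for x y
    using cA[of x] by (simp only: mult.assoc[symmetric])
  have rB: "x*(B*y) = B*(x*y)" for x y
    using cB[of x] by (simp only: mult.assoc[symmetric])
  have l: "A*((A*(a*b)+B*(b*a))*c) + B*(c*(A*(a*b)+B*(b*a)))
     = A*(A*(a*(b*c))) + A*(B*(b*(a*c))) + A*(B*(c*(a*b))) + B*(B*(c*(b*a)))"
    by (simp only: distrib_left distrib_right mult.assoc rA[of c] rB[of c] rA[of B] add.assoc)
  have r: "A*(a*(A*(b*c)+B*(c*b))) + B*((A*(b*c)+B*(c*b))*a)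
     = A*(A*(a*(b*c))) + A*(B*(a*(c*b))) + A*(B*(b*(c*a))) + B*(B*(c*(b*a)))"
    by (simp only: distrib_left distrib_right mult.assoc rA[of a] rB[of a] rA[of B] add.assoc)
  have g1: "p - q - (r - s) = (p + s) - (r + q)" for p q r s :: 'u by (simp add: algebra_simps)
  have g2: "x + y + z + w - (x + y' + z' + w) = (y + z) - (y' + z')" for x y z w y' z' :: 'u
    by (simp add: algebra_simps)
  have e1: "A*(B*(b*(a*c - c*a) - (a*c-c*a)*b)) = (A*(B*(b*(a*c))) + A*(B*(c*(a*b)))) - (A*(B*(a*(c*b))) + A*(B*(b*(c*a))))"
    unfolding right_diff_distrib left_diff_distrib mult.assoc by (rule g1)
  have "A*(B*(b*(a*c - c*a) - (a*c-c*a)*b)) =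
     (A*((A*(a*b)+B*(b*a))*c) + B*(c*(A*(a*b)+B*(b*a))))
      - (A*(a*(A*(b*c)+B*(c*b))) + B*((A*(b*c)+B*(c*b))*a))"
    unfolding l r e1 g2 ..
  also have "\<dots> = 0" unfolding E by (rule diff_self)
  finally show ?thesis .
qed

lemma A1_diag:
  fixes scale :: "'k::field \<Rightarrow> 'u::ring_1 \<Rightarrow> 'u"
  assumes char: "(2::'k) \<noteq> 0" and alg: "F_algebra scale"
    and "((u::'u), u) \<in> A1"
  shows "u = 0"
proof -
  from assms(3) obtain w where "(u,u) = (w, -w)" unfolding A1_def by blast
  hence "u = - u" by auto
  hence "u + u = 0" by (metis right_minus)
  thus ?thesis using two_cancel[OF char alg] by blast
qed

lemma scomm_even:
  fixes scale :: "'k::field \<Rightarrow> 'u::ring_1 \<Rightarrow> 'u"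
  assumes char: "(2::'k) \<noteq> 0" and alg: "F_algebra scale"
  shows "scomm ((u::'u), u) y = pmult (u,u) y - pmult y (u,u)"
proof (cases "(u,u) \<in> A1")
  case True
  hence "u = 0" using A1_diag[OF char alg] by blast
  thus ?thesis by (simp add: scomm_def pmult_def zero_prod_def)
next
  case False
  thus ?thesis by (simp add: scomm_def)
qed

lemma odd_in: "((v::'u::ring_1), -v) \<in> A1" unfolding A1_def by blast
lemma even_in: "((v::'u::ring_1), v) \<in> A0" unfolding A0_def by blast

theorem theorem5p1:
  fixes scale :: "'k::field \<Rightarrow> 'u::ring_1 \<Rightarrow> 'u"
    and \<phi> :: "'u \<times> 'u \<Rightarrow> 'u \<times> 'u"
  assumes char: "(2::'k) \<noteq> 0"
    and alg: "F_algebra scale"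
    and noncomm: "\<exists>x y::'u. x * y \<noteq> y * x"
    and prime: "prime_ring TYPE('u)"
    and lie: "lie_superaut scale \<phi>"
  shows "superaut scale \<phi> \<or> superantiaut scale (\<lambda>x. - \<phi> x)"
proof -
  interpret module scale using alg by (simp add: F_algebra_def)
  note L = lie[unfolded lie_superaut_def]
  have bij: "bij \<phi>" using L by (rule conjunct1)
  have gl: "graded_linear scale \<phi>" using L by (rule conjunct1[OF conjunct2])
  have hom: "\<forall>x\<in>homog. \<forall>y\<in>homog. \<phi> (scomm x y) = scomm (\<phi> x) (\<phi> y)"
    using L by (rule conjunct2[OF conjunct2])
  note G = gl[unfolded graded_linear_def]
  have add: "\<And>x y. \<phi> (x + y) = \<phi> x + \<phi> y" using conjunct1[OF G] by (rule spec2)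
  have i0: "\<phi> ` A0 \<subseteq> A0" using G by (rule conjunct1[OF conjunct2[OF conjunct2]])
  have i1: "\<phi> ` A1 \<subseteq> A1" using G by (rule conjunct2[OF conjunct2[OF conjunct2]])
  define f where "f u = fst (\<phi> (u,u))" for u
  define g where "g u = fst (\<phi> (u,-u))" for u
  have phe: "\<phi> (u,u) = (f u, f u)" for u
  proof -
    have "\<phi> (u,u) \<in> A0" using i0 even_in by blast
    then obtain w where "\<phi> (u,u) = (w,w)" unfolding A0_def by blast
    thus ?thesis unfolding f_def by simp
  qed
  have pho: "\<phi> (u,-u) = (g u, - g u)" for u
  proof -
    have "\<phi> (u,-u) \<in> A1" using i1 odd_in by blast
    then obtain w where "\<phi> (u,-u) = (w,-w)" unfolding A1_def by blast
    thus ?thesis unfolding g_def by simp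
  qed
  have fadd: "f (x + y) = f x + f y" for x y
    using add[of "(x,x)" "(y,y)"] phe by simp
  have gadd: "g (x + y) = g x + g y" for x y
  proof -
    have eq: "(x + y, -(x+y)) = (x,-x)+(y,-y)" by simp
    have "g (x + y) = fst (\<phi> (x + y, -(x+y)))" unfolding pho[of "x+y"] by simp
    also have "\<dots> = fst (\<phi> (x,-x) + \<phi> (y,-y))" unfolding eq add ..
    also have "\<dots> = g x + g y" unfolding pho by simp
    finally show ?thesis .
  qed
  have g0: "g 0 = 0" using gadd[of 0 0] by simp
  have gminus: "g (x - y) = g x - g y" for x y
    using gadd[of "x - y" y] by (simp add: algebra_simps)
  have phid: "\<phi> (s + d, s - d) = (f s + g d, f s - g d)" for s d
    using add[of "(s,s)" "(d,-d)"] phe pho by simp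
  have dec: "\<exists>s d. x = (s + d, s - d)" for x :: "'u \<times> 'u"
  proof -
    obtain p q where x: "x = (p,q)" by fastforce
    let ?s = "scale (inverse 2) p + scale (inverse 2) q"
    let ?d = "scale (inverse 2) p - scale (inverse 2) q"
    have "?s + ?d = p" using half_twice[OF char alg, of p] by (simp add: algebra_simps)
    moreover have "?s - ?d = q" using half_twice[OF char alg, of q] by (simp add: algebra_simps)
    ultimately show ?thesis using x by metis
  qed
  have fsurj: "\<exists>u. f u = b" for b
  proof -
    obtain x where "\<phi> x = (b,b)" using bij by (metis bij_def surj_def)
    moreover obtain s d where "x = (s + d, s - d)" using dec by blast
    ultimately have "(f s + g d, f s - g d) = (b, b)" using phid[of s d] by simp
    hence h: "f s + g d = b" "f s - g d = b" by simp_all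
    have "g d + g d = (f s + g d) - (f s - g d)" by (simp add: algebra_simps)
    hence "g d + g d = 0" using h by simp
    hence "g d = 0" using two_cancel[OF char alg] by blast
    thus ?thesis using h by auto
  qed
  have gsurj: "\<exists>u. g u = b" for b
  proof -
    obtain x where "\<phi> x = (b,-b)" using bij by (metis bij_def surj_def)
    moreover obtain s d where "x = (s + d, s - d)" using dec by blast
    ultimately have "(f s + g d, f s - g d) = (b, -b)" using phid[of s d] by simp
    hence h: "f s + g d = b" "f s - g d = -b" by simp_all
    have "f s + f s = (f s + g d) + (f s - g d)" by (simp add: algebra_simps)
    hence "f s + f s = 0" using h by simp
    hence "f s = 0" using two_cancel[OF char alg] by blast
    thus ?thesis using h by auto
  qed
  have C2: "g (u*v - v*u) = f u * g v - g v * f u" for u v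
  proof -
    have 1: "\<phi> (scomm (u,u) (v,-v)) = scomm (\<phi> (u,u)) (\<phi> (v,-v))"
      using hom even_in odd_in unfolding homog_def by blast
    have 2: "scomm (u,u) (v,-v) = (u*v - v*u, - (u*v - v*u))"
      by (simp add: scomm_even[OF char alg] pmult_def algebra_simps)
    have 3: "scomm (f u, f u) (g v, - g v) = (f u * g v - g v * f u, - (f u * g v - g v * f u))"
      by (simp add: scomm_even[OF char alg] pmult_def algebra_simps)
    have "(g (u*v - v*u), - g (u*v - v*u)) = (f u * g v - g v * f u, - (f u * g v - g v * f u))"
      using 1 unfolding 2 3 pho phe .
    thus ?thesis by simp
  qed
  have C3: "f (v*w + w*v) = g v * g w + g w * g v" for v w
  proof -
    have 1: "\<phi> (scomm (v,-v) (w,-w)) = scomm (\<phi> (v,-v)) (\<phi> (w,-w))"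
      using hom odd_in unfolding homog_def by blast
    have 2: "scomm (v,-v) (w,-w) = (v*w + w*v, v*w + w*v)"
      by (simp add: scomm_def pmult_def odd_in)
    have 3: "scomm (g v, - g v) (g w, - g w) = (g v * g w + g w * g v, g v * g w + g w * g v)"
      by (simp add: scomm_def pmult_def odd_in)
    have "(f (v*w + w*v), f (v*w + w*v)) = (g v * g w + g w * g v, g v * g w + g w * g v)"
      using 1 unfolding 2 3 pho phe .
    thus ?thesis by simp
  qed
  define e where "e = g 1"
  have ecent: "e * x = x * e" for x
  proof -
    obtain u where "f u = x" using fsurj by blast
    thus ?thesis using C2[of u 1] g0 unfolding e_def by simp
  qed
  have fe: "f v = e * g v" for v
  proof -
    have "f v + f v = e * g v + e * g v" using C3[of v 1] fadd[of v v] ecent unfolding e_def by simp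
    thus ?thesis using two_cancel_eq[OF char alg] by blast
  qed
  have L: "g (v*w - w*v) = e * (g v * g w - g w * g v)" for v w
    using C2[of v w] fe ecent by (simp add: algebra_simps)
  have J: "e * g (v*w + w*v) = g v * g w + g w * g v" for v w
    using C3[of v w] fe by simp
  define A where "A = 1 + e*e"
  define B where "B = 1 - e*e"
  have K: "e * g (v*w) + e * g (v*w) = A * (g v * g w) + B * (g w * g v)" for v w
  proof -
    have "g (v*w) + g (v*w) = g (v*w + w*v) + g (v*w - w*v)"
    proof -
      have "v*w + w*v + (v*w - w*v) = v*w + v*w" by (simp add: algebra_simps)
      thus ?thesis using gadd[of "v*w + w*v" "v*w - w*v"] gadd[of "v*w" "v*w"] by simp
    qed
    hence "e * g (v*w) + e * g (v*w) = e * g (v*w + w*v) + e * g (v*w - w*v)"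
      by (simp add: distrib_left[symmetric])
    also have "\<dots> = (g v * g w + g w * g v) + e * (e * (g v * g w - g w * g v))"
      using J L by simp
    finally show ?thesis unfolding A_def B_def by (simp add: algebra_simps)
  qed
  have ecent2: "x*(e*y) = e*(x*y)" for x y
    using ecent[of x] by (simp only: mult.assoc[symmetric])
  have Acent: "A*x = x*A" for x
  proof -
    have "e*(e*x) = x*(e*e)" using ecent2[of x e, symmetric] ecent2[of e x] ecent[of x]
      by (simp only: mult.assoc)
    thus ?thesis unfolding A_def by (simp add: algebra_simps mult_2)
  qed
  have Bcent: "B*x = x*B" for x
  proof -
    have "e*(e*x) = x*(e*e)" using ecent2[of x e, symmetric] ecent2[of e x] ecent[of x]
      by (simp only: mult.assoc)
    thus ?thesis unfolding B_def by (simp add: algebra_simps mult_2)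
  qed
  have assoc: "A*(B*(b*(a*c - c*a) - (a*c-c*a)*b)) = 0" for a b c
  proof -
    obtain v where v: "g v = a" using gsurj by blast
    obtain w where w: "g w = b" using gsurj by blast
    obtain z where z: "g z = c" using gsurj by blast
    define P where "P = g (v*w)"
    define Q where "Q = g (w*z)"
    define X where "X = e * g (v*w*z)"
    have E1: "X + X = A*(P*c) + B*(c*P)" using K[of "v*w" z] z unfolding X_def P_def by simp
    have E2: "X + X = A*(a*Q) + B*(Q*a)" using K[of v "w*z"] v unfolding X_def Q_def
      by (simp add: mult.assoc)
    have F1: "(e+e)*(A*(P*c) + B*(c*P)) = A*((e*P+e*P)*c) + B*(c*(e*P+e*P))"
      by (simp add: algebra_simps ecent2[of A] ecent2[of B] ecent2[of c])
    have F2: "(e+e)*(A*(a*Q) + B*(Q*a)) = A*(a*(e*Q+e*Q)) + B*((e*Q+e*Q)*a)"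
      by (simp add: algebra_simps ecent2[of A] ecent2[of B] ecent2[of a])
    have K1: "e*P+e*P = A*(a*b) + B*(b*a)" using K[of v w] v w unfolding P_def by simp
    have K2: "e*Q+e*Q = A*(b*c) + B*(c*b)" using K[of w z] w z unfolding Q_def by simp
    have "A*((A*(a*b)+B*(b*a))*c) + B*(c*(A*(a*b)+B*(b*a)))
          = A*(a*(A*(b*c)+B*(c*b))) + B*((A*(b*c)+B*(c*b))*a)"
    proof -
      have "A*((A*(a*b)+B*(b*a))*c) + B*(c*(A*(a*b)+B*(b*a))) = (e+e)*(X+X)"
        using E1 F1 K1 by simp
      also have "\<dots> = A*(a*(A*(b*c)+B*(c*b))) + B*((A*(b*c)+B*(c*b))*a)"
        using E2 F2 K2 by simp
      finally show ?thesis .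
    qed
    thus ?thesis using assoc_core[OF Acent Bcent] by blast
  qed
  have AB: "A*B = 0"
  proof (rule ccontr)
    assume nz: "A*B \<noteq> 0"
    have "(A*B)*x = x*(A*B)" for x
    proof -
      have "(A*B)*x = A*(x*B)" using Bcent[of x] by (simp add: mult.assoc)
      also have "\<dots> = x*(A*B)" using Acent[of x] by (simp add: mult.assoc[symmetric])
      finally show ?thesis .
    qed
    hence "b*(a*c - c*a) - (a*c-c*a)*b = 0" for a b c :: 'u
    proof -
      assume cAB: "\<And>x. (A*B)*x = x*(A*B)"
      have "(A*B)*(b*(a*c - c*a) - (a*c-c*a)*b) = 0"
        using assoc[of b a c] by (simp only: mult.assoc)
      thus ?thesis using central_nozd[OF prime cAB] nz by blast
    qed
    hence "b*(a*c - c*a) = (a*c-c*a)*b" for a b c :: 'u by simp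
    hence "x*y = y*x" for x y :: 'u using comm_central_commutative[OF prime] by blast
    thus False using noncomm by blast
  qed
  hence AorB: "A = 0 \<or> B = 0" using central_nozd[OF prime Acent] by blast
  have f0: "f 0 = 0" using fadd[of 0 0] by simp
  show ?thesis
  proof (cases "B = 0")
    case True
    hence ee: "e*e = 1" unfolding B_def by simp
    have ee2: "e*(e*y) = y" for y using ee by (simp add: mult.assoc[symmetric])
    have mulg: "e * g (v*w) = g v * g w" for v w
    proof -
      have "e * g (v*w) + e * g (v*w) = g v * g w + g v * g w"
        using K[of v w] True ee unfolding A_def by (simp add: algebra_simps mult_2)
      thus ?thesis using two_cancel_eq[OF char alg] by blast
    qed
    have gmul: "g (v*w) = e * (g v * g w)" for v w
      using arg_cong[OF mulg[of v w], of "\<lambda>t. e*t"] ee2 by simp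
    have "\<phi> (pmult x y) = pmult (\<phi> x) (\<phi> y)" for x y
    proof -
      obtain s d where x: "x = (s + d, s - d)" using dec by blast
      obtain s' d' where y: "y = (s' + d', s' - d')" using dec by blast
      have "pmult x y = (s*s' + d*d' + (s*d' + d*s'), s*s' + d*d' - (s*d' + d*s'))"
        unfolding x y pmult_def by (simp add: algebra_simps)
      hence "\<phi> (pmult x y) = (f (s*s' + d*d') + g (s*d' + d*s'), f (s*s' + d*d') - g (s*d' + d*s'))"
        using phid by simp
      also have "\<dots> = pmult (\<phi> x) (\<phi> y)"
        unfolding x y phid pmult_def
        by (simp add: fadd gadd fe mulg gmul algebra_simps ee2 ecent2[of "g s"] ecent2[of "g d"]
            ecent2[of "g s'"] ecent2[of "g d'"])
      finally show ?thesis .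
    qed
    hence "superaut scale \<phi>" unfolding superaut_def using bij gl by blast
    thus ?thesis by blast
  next
    case False
    hence A0': "A = 0" using AorB by blast
    hence ee: "e*e = -1" unfolding A_def by (metis add.commute add_eq_0_iff)
    have ee2: "e*(e*y) = -y" for y using ee by (simp add: mult.assoc[symmetric])
    have mulg: "e * g (v*w) = g w * g v" for v w
    proof -
      have "e * g (v*w) + e * g (v*w) = g w * g v + g w * g v"
        using K[of v w] A0' ee unfolding B_def by (simp add: algebra_simps mult_2)
      thus ?thesis using two_cancel_eq[OF char alg] by blast
    qed
    have gmul: "g (v*w) = - (e * (g w * g v))" for v w
      using arg_cong[OF mulg[of v w], of "\<lambda>t. e*t"] ee2 by (metis minus_minus)
    define \<psi> where "\<psi> = (\<lambda>x. - \<phi> x)"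
    have bijpsi: "bij \<psi>"
    proof -
      have "inj \<psi>" using bij unfolding \<psi>_def bij_def inj_def by auto
      moreover have "surj \<psi>"
      proof (rule surjI)
        fix z show "\<psi> (inv \<phi> (- z)) = z"
          using bij unfolding \<psi>_def by (simp add: bij_is_surj surj_f_inv_f)
      qed
      ultimately show ?thesis by (simp add: bij_def)
    qed
    have glpsi: "graded_linear scale \<psi>"
    proof -
      have a: "\<psi> (x + y) = \<psi> x + \<psi> y" for x y unfolding \<psi>_def using add by simp
      have b: "\<psi> (pscale scale c x) = pscale scale c (\<psi> x)" for c x
        using gl unfolding \<psi>_def graded_linear_def by (simp add: pscale_def)
      have c: "\<psi> ` A0 \<subseteq> A0"
      proof
        fix z assume "z \<in> \<psi> ` A0"
        then obtain u where "z = \<psi> (u,u)" unfolding A0_def by blast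
        thus "z \<in> A0" unfolding \<psi>_def A0_def using phe by simp
      qed
      have d: "\<psi> ` A1 \<subseteq> A1"
      proof
        fix z assume "z \<in> \<psi> ` A1"
        then obtain u where "z = \<psi> (u,-u)" unfolding A1_def by blast
        thus "z \<in> A1" unfolding \<psi>_def A1_def using pho by simp
      qed
      show ?thesis unfolding graded_linear_def using a b c d by blast
    qed
    have psie: "\<psi> (u,u) = (- (e * g u), - (e * g u))" for u unfolding \<psi>_def using phe fe by simp
    have psio: "\<psi> (u,-u) = (- g u, g u)" for u unfolding \<psi>_def using pho by simp
    have prod: "\<psi> (pmult x y) = (if x \<in> A1 \<and> y \<in> A1 then - pmult (\<psi> y) (\<psi> x) else pmult (\<psi> y) (\<psi> x))"
      if hx: "x \<in> homog" and hy: "y \<in> homog" for x y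
    proof -
      have ee_ee: "pmult (u,u) (w,w) = (u*w, u*w)" "pmult (u,u) (w,-w) = (u*w, -(u*w))"
        "pmult (u,-u) (w,w) = (u*w, -(u*w))" "pmult (u,-u) (w,-w) = (u*w, u*w)" for u w :: 'u
        by (simp_all add: pmult_def)
      have psi0: "\<psi> (0,0) = (0,0)" using psie[of 0] g0 by simp
      have Z: "\<psi> (pmult x y) = pmult (\<psi> y) (\<psi> x)" if "x = 0 \<or> y = 0"
        using that psi0 by (auto simp: pmult_def zero_prod_def)
      have Zm: "\<psi> (pmult x y) = - pmult (\<psi> y) (\<psi> x)" if "x = 0 \<or> y = 0"
        using that psi0 by (auto simp: pmult_def zero_prod_def)
      show ?thesis
      proof (cases "x \<in> A0")
        case xe: True
        then obtain u where xu: "x = (u,u)" unfolding A0_def by blast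
        show ?thesis
        proof (cases "u = 0")
          case True thus ?thesis using Z Zm xu by (simp add: zero_prod_def)
        next
          case unz: False
          hence nc: "\<not> (x \<in> A1 \<and> y \<in> A1)" using A1_diag[OF char alg] xu by blast
          show ?thesis
          proof (cases "y \<in> A0")
            case True
            then obtain w where yw: "y = (w,w)" unfolding A0_def by blast
            have l: "\<psi> (pmult x y) = (-(g w*g u), -(g w*g u))"
              by (simp only: xu yw ee_ee psie mulg)
            have r: "pmult (\<psi> y) (\<psi> x) = (-(g w*g u), -(g w*g u))"
              unfolding xu yw psie pmult_def by (simp add: mult.assoc ecent2[of "g w"] ee2)
            show ?thesis unfolding if_not_P[OF nc] using l r by simp
          next
            case False
            hence "y \<in> A1" using hy unfolding homog_def by blast
            then obtain w where yw: "y = (w,-w)" unfolding A1_def by blast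
            have l: "\<psi> (pmult x y) = (-(g (u*w)), g (u*w))"
              by (simp only: xu yw ee_ee psio)
            hence l': "\<psi> (pmult x y) = (e*(g w*g u), -(e*(g w*g u)))"
              unfolding gmul by simp
            have r: "pmult (\<psi> y) (\<psi> x) = (e*(g w*g u), -(e*(g w*g u)))"
              unfolding xu yw psie psio pmult_def by (simp add: ecent2[of "g w"])
            show ?thesis unfolding if_not_P[OF nc] using l' r by simp
          qed
        qed
      next
        case xo: False
        hence "x \<in> A1" using hx unfolding homog_def by blast
        then obtain u where xu: "x = (u,-u)" unfolding A1_def by blast
        show ?thesis
        proof (cases "y \<in> A0")
          case True
          then obtain w where yw: "y = (w,w)" unfolding A0_def by blast
          show ?thesis
          proof (cases "w = 0")
            case True thus ?thesis using Z Zm yw by (simp add: zero_prod_def)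
          next
            case False
            hence nc: "\<not> (x \<in> A1 \<and> y \<in> A1)" using A1_diag[OF char alg] yw by blast
            have l: "\<psi> (pmult x y) = (-(g (u*w)), g (u*w))"
              by (simp only: xu yw ee_ee psio)
            hence l': "\<psi> (pmult x y) = (e*(g w*g u), -(e*(g w*g u)))"
              unfolding gmul by simp
            have r: "pmult (\<psi> y) (\<psi> x) = (e*(g w*g u), -(e*(g w*g u)))"
              unfolding xu yw psie psio pmult_def by (simp add: mult.assoc)
            show ?thesis unfolding if_not_P[OF nc] using l' r by simp
          qed
        next
          case False
          hence "y \<in> A1" using hy unfolding homog_def by blast
          then obtain w where yw: "y = (w,-w)" unfolding A1_def by blast
          have c: "x \<in> A1 \<and> y \<in> A1" using xu yw odd_in by blast
          have l: "\<psi> (pmult x y) = (-(g w*g u), -(g w*g u))"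
            by (simp only: xu yw ee_ee psie mulg)
          have r: "pmult (\<psi> y) (\<psi> x) = (g w*g u, g w*g u)"
            unfolding xu yw psio pmult_def by simp
          show ?thesis unfolding if_P[OF c] using l r by simp
        qed
      qed
    qed
    have "superantiaut scale \<psi>" unfolding superantiaut_def using bijpsi glpsi prod by blast
    thus ?thesis unfolding \<psi>_def by blast
  qed
qed

end
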